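(* Let $P\subset\mathbb{R}^d$ be a full-dimensional lattice polytope with codegree $a$ satisfying $P=\lfloor aP\rfloor+\{P\}$. Then: (1) $kP=\lfloor (k+a-1)P\rfloor+\{P\}$ for all integers $k\ge1$; (2) $\lfloor k'P\rfloor = \lfloor aP\rfloor + (k'-a)P$ for all integers $k'\ge a$.
   Context: $P$ has facet presentation $P=\{x: n_F(x)\ge -h_F\ \forall \text{ facets } F\}$ with $n_F\in(\mathbb{Z}^d)^*$ primitive inner normals and $h_F\in\mathbb{Z}$. The codegree is $a=\min\{k\in\mathbb{Z}_{\ge1}: \mathrm{int}(kP)\cap\mathbb{Z}^d\ne\varnothing\}$. For a lattice polytope $Q$, $\lfloor Q\rfloor=\mathrm{conv}(\mathrm{int}(Q)\cap\mathbb{Z}^d)$ (the floor polytope). The remainder polytope of $P$ is $\{P\}=\mathrm{conv}\{x\in\mathbb{Z}^d: n_F(x)\ge (a-1)h_F-1\ \forall F\}$. $+$ denotes Minkowski sum, and $0\cdot P=\{0\}$. *)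

theory Defs
  imports "HOL-Analysis.Analysis"
begin

definition integral_vec :: "real^'n \<Rightarrow> bool" where
  "integral_vec x \<longleftrightarrow> (\<forall>i. x $ i \<in> \<int>)"

definition lattice_polytope :: "(real^'n) set \<Rightarrow> bool" where
  "lattice_polytope P \<longleftrightarrow>
     (\<exists>S. finite S \<and> (\<forall>x\<in>S. integral_vec x) \<and> P = convex hull S)"

definition dilate :: "real \<Rightarrow> (real^'n) set \<Rightarrow> (real^'n) set" where
  "dilate k P = (\<lambda>x. k *\<^sub>R x) ` P"

definition msum :: "(real^'n) set \<Rightarrow> (real^'n) set \<Rightarrow> (real^'n) set" where
  "msum A B = {x + y | x y. x \<in> A \<and> y \<in> B}"

definition codegree :: "(real^'n) set \<Rightarrow> nat" where
  "codegree P = (LEAST k::nat. k \<ge> 1 \<and>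
      (\<exists>x. integral_vec x \<and> x \<in> interior (dilate (real k) P)))"

definition floor_polytope :: "(real^'n) set \<Rightarrow> (real^'n) set" where
  "floor_polytope Q = convex hull {x. integral_vec x \<and> x \<in> interior Q}"

definition primitive_vec :: "real^'n \<Rightarrow> bool" where
  "primitive_vec n \<longleftrightarrow> integral_vec n \<and> n \<noteq> 0 \<and>
     (\<forall>(k::nat) m. integral_vec m \<and> n = real k *\<^sub>R m \<longrightarrow> k = 1)"

text \<open>n is the primitive inner normal of facet F of P: n is primitive and the
  linear functional n attains its minimum over P on F (so n(x) >= -h_F on P,
  with h_F = -n(y) for y in F).\<close>
definition primitive_inner_normal :: "(real^'n) set \<Rightarrow> (real^'n) set \<Rightarrow> real^'n \<Rightarrow> bool" where
  "primitive_inner_normal P F n \<longleftrightarrow> primitive_vec n \<and>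
     (\<forall>x\<in>P. \<forall>y\<in>F. n \<bullet> y \<le> n \<bullet> x)"

definition remainder_polytope :: "(real^'n) set \<Rightarrow> (real^'n) set" where
  "remainder_polytope P = convex hull {x. integral_vec x \<and>
     (\<forall>F n. F facet_of P \<and> primitive_inner_normal P F n \<longrightarrow>
        (\<forall>y\<in>F. n \<bullet> x \<ge> (real (codegree P) - 1) * (- (n \<bullet> y)) - 1))}"

end

theory Submission
  imports Defs
begin


lemma msum_eq: "msum A B = A + B"
  by (auto simp: msum_def set_plus_def)

lemma integral_vec_add: "integral_vec x \<Longrightarrow> integral_vec y \<Longrightarrow> integral_vec (x + y)"
  by (auto simp: integral_vec_def)

lemma integral_vec_nat_scale: "integral_vec x \<Longrightarrow> integral_vec (real m *\<^sub>R x)"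
  by (auto simp: integral_vec_def)

lemma integral_vec_neg: "integral_vec x \<Longrightarrow> integral_vec (- x)"
  by (auto simp: integral_vec_def)

lemma integral_vec_diff: "integral_vec x \<Longrightarrow> integral_vec y \<Longrightarrow> integral_vec (x - y)"
  by (auto simp: integral_vec_def)

lemma integral_inner: "integral_vec x \<Longrightarrow> integral_vec y \<Longrightarrow> x \<bullet> y \<in> \<int>"
  unfolding inner_vec_def integral_vec_def
  by (auto intro!: Ints_sum Ints_mult)

lemma finite_integral_bounded:
  fixes X :: "(real^'n) set"
  assumes "bounded X"
  shows "finite {x. integral_vec x \<and> x \<in> X}"
proof -
  obtain M where M: "\<And>x. x \<in> X \<Longrightarrow> norm x \<le> M"
    using assms bounded_iff by blast
  let ?R = "{-\<lceil>M\<rceil>..\<lceil>M\<rceil>}"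
  have "{x. integral_vec x \<and> x \<in> X} \<subseteq> (\<lambda>f. \<chi> i. real_of_int (f i)) ` (PiE UNIV (\<lambda>_. ?R))"
  proof
    fix x assume x: "x \<in> {x. integral_vec x \<and> x \<in> X}"
    have xi: "x $ i \<in> \<int>" for i using x by (auto simp: integral_vec_def)
    have e: "real_of_int \<lfloor>x $ i\<rfloor> = x $ i" for i
      using xi[of i] by (metis Ints_cases floor_of_int)
    have "\<bar>x $ i\<bar> \<le> M" for i
    proof -
      have "norm x \<le> M" using M x by auto
      then show ?thesis using component_le_norm_cart[of x i] by linarith
    qed
    have "\<lfloor>x $ i\<rfloor> \<in> ?R" for i
    proof -
      have b: "\<bar>x $ i\<bar> \<le> M" by fact
      have 1: "real_of_int \<lfloor>x $ i\<rfloor> \<le> real_of_int \<lceil>M\<rceil>"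
      proof -
        have "x $ i \<le> M" using b by simp
        moreover have "M \<le> of_int \<lceil>M\<rceil>" by (rule le_of_int_ceiling)
        ultimately show ?thesis using e[of i] by linarith
      qed
      have 2: "real_of_int (- \<lceil>M\<rceil>) \<le> real_of_int \<lfloor>x $ i\<rfloor>"
      proof -
        have "- M \<le> x $ i" using b by simp
        moreover have "M \<le> of_int \<lceil>M\<rceil>" by (rule le_of_int_ceiling)
        ultimately show ?thesis using e[of i] by (simp only: of_int_minus)
      qed
      show ?thesis using 1 2 by (simp only: of_int_le_iff atLeastAtMost_iff)
    qed
    then have "(\<lambda>i. \<lfloor>x $ i\<rfloor>) \<in> PiE UNIV (\<lambda>_. ?R)" by auto
    moreover have "x = (\<chi> i. real_of_int ((\<lambda>i. \<lfloor>x $ i\<rfloor>) i))"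
      unfolding vec_eq_iff by (simp only: vec_lambda_beta e) simp
    ultimately show "x \<in> (\<lambda>f. \<chi> i. real_of_int (f i)) ` (PiE UNIV (\<lambda>_. ?R))" by - (rule image_eqI[where f="\<lambda>f. \<chi> i. real_of_int (f i)" and x="\<lambda>i. \<lfloor>x $ i\<rfloor>"]; assumption)
  qed
  moreover have "finite (PiE (UNIV::'n set) (\<lambda>_. ?R))"
    by (intro finite_PiE) auto
  ultimately show ?thesis by (meson finite_imageI finite_subset)
qed

lemma dilate_add:
  assumes "convex P" "0 \<le> s" "0 \<le> t"
  shows "dilate (s + t) P = dilate s P + dilate t P"
proof
  show "dilate (s + t) P \<subseteq> dilate s P + dilate t P"
    by (auto simp: dilate_def set_plus_def scaleR_add_left)
  show "dilate s P + dilate t P \<subseteq> dilate (s + t) P"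
  proof
    fix z assume "z \<in> dilate s P + dilate t P"
    then obtain p q where pq: "p \<in> P" "q \<in> P" "z = s *\<^sub>R p + t *\<^sub>R q"
      by (auto simp: dilate_def set_plus_def)
    show "z \<in> dilate (s + t) P"
    proof (cases "s + t = 0")
      case True
      then have "s = 0" "t = 0" using assms by auto
      then show ?thesis using pq by (auto simp: dilate_def)
    next
      case False
      then have st: "s + t > 0" using assms by auto
      let ?w = "(s / (s + t)) *\<^sub>R p + (t / (s + t)) *\<^sub>R q"
      have "?w \<in> P"
        using assms(1) pq st assms by (intro convexD) (auto simp: add_divide_distrib[symmetric])
      moreover have "z = (s + t) *\<^sub>R ?w"
        using st pq by (simp add: scaleR_add_right)
      ultimately show ?thesis by (auto simp: dilate_def)
    qed
  qed
qed

lemma dilate_1: "dilate 1 P = P"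
  by (simp add: dilate_def)

lemma interior_strict:
  fixes m :: "real^'n"
  assumes "w \<in> interior Q" "Q \<subseteq> {y. \<gamma> \<le> m \<bullet> y}" "m \<noteq> 0"
  shows "\<gamma> < m \<bullet> w"
proof -
  obtain e where e: "e > 0" "ball w e \<subseteq> Q"
    using assms(1) mem_interior by blast
  let ?y = "w - (e / 2 / norm m) *\<^sub>R m"
  have "dist w ?y = e / 2" using assms(3) e by (simp add: dist_norm)
  then have "?y \<in> Q" using e by auto
  then have "\<gamma> \<le> m \<bullet> ?y" using assms(2) by auto
  also have "m \<bullet> ?y = m \<bullet> w - e / 2 * norm m"
  proof -
    have mm: "m \<bullet> m = norm m * norm m" by (metis dot_square_norm power2_eq_square)
    show ?thesis using assms(3) by (simp add: inner_diff_right mm)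
  qed
  finally have "\<gamma> \<le> m \<bullet> w - e / 2 * norm m" .
  moreover have "e / 2 * norm m > 0" using e assms(3) by simp
  ultimately show ?thesis by linarith
qed

lemma cancel_sum:
  fixes A B C :: "(real^'n) set"
  assumes "A + C \<subseteq> B + C" "closed B" "convex B" "bounded C" "C \<noteq> {}"
  shows "A \<subseteq> B"
proof
  fix z assume z: "z \<in> A"
  show "z \<in> B"
  proof (rule ccontr)
    assume "z \<notin> B"
    then obtain u \<beta> where u: "u \<bullet> z < \<beta>" "\<And>x. x \<in> B \<Longrightarrow> u \<bullet> x > \<beta>"
      using separating_hyperplane_closed_point[OF assms(3,2)] by blast
    obtain M where M: "\<And>c. c \<in> C \<Longrightarrow> norm c \<le> M"
      using assms(4) bounded_iff by blast
    have lb: "- (norm u * M) \<le> u \<bullet> c" if "c \<in> C" for c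
    proof -
      have "(-u) \<bullet> c \<le> norm u * norm c" using norm_cauchy_schwarz[of "-u" c] by simp
      also have "\<dots> \<le> norm u * M" using M[OF that] by (simp add: mult_left_mono)
      finally show ?thesis by simp
    qed
    have bdd: "bdd_below ((\<bullet>) u ` C)" using lb by (auto intro!: bdd_belowI)
    define \<mu> where "\<mu> = Inf ((\<bullet>) u ` C)"
    have "\<mu> < \<mu> + (\<beta> - u \<bullet> z)" using u by simp
    then have "\<exists>x\<in>(\<bullet>) u ` C. x < \<mu> + (\<beta> - u \<bullet> z)"
      unfolding \<mu>_def using assms(5) cInf_less_iff[OF _ bdd] by blast
    then obtain c where c: "c \<in> C" "u \<bullet> c < \<mu> + (\<beta> - u \<bullet> z)"
      by blast
    have "z + c \<in> A + C" using z c by (auto simp: set_plus_def)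
    then have "z + c \<in> B + C" using assms(1) by blast
    then obtain b c' where bc: "b \<in> B" "c' \<in> C" "z + c = b + c'"
      by (auto elim!: set_plus_elim)
    have "u \<bullet> c' = u \<bullet> z + u \<bullet> c - u \<bullet> b"
      using bc(3) by (metis add_diff_cancel_left' diff_add_cancel inner_add_right inner_diff_right)
    also have "\<dots> < \<mu>" using c u(2)[OF bc(1)] by simp
    finally have "u \<bullet> c' < \<mu>" .
    moreover have "\<mu> \<le> u \<bullet> c'" unfolding \<mu>_def using bc(2) bdd by (auto intro: cInf_lower)
    ultimately show False by simp
  qed
qed



lemma det_integral:
  fixes A :: "real^'n^'n"
  assumes "\<And>i j. A$i$j \<in> \<int>"
  shows "det A \<in> \<int>"
  unfolding det_def using assms by (auto intro!: Ints_sum Ints_mult Ints_prod Ints_of_int)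

lemma integral_normal:
  fixes B :: "(real^'n) set"
  assumes indB: "independent B" and cB: "card B = CARD('n) - 1" and intB: "\<forall>b\<in>B. integral_vec b"
  shows "\<exists>n. integral_vec n \<and> n \<noteq> 0 \<and> (\<forall>b\<in>B. n \<bullet> b = 0)"
proof -
  obtain k0 :: 'n where True by simp
  have finB: "finite B" using indB by (rule finiteI_independent)
  have cc: "card (UNIV - {k0}) = card B" by (simp add: card_Diff_singleton cB)
  have "\<exists>g. bij_betw g (UNIV - {k0}) B"
    by (rule finite_same_card_bij) (use finB cc in auto)
  then obtain g where g: "bij_betw g (UNIV - {k0}) B" by blast
  define R where "R w = (\<chi> i. if i = k0 then w else g i)" for w :: "real^'n"
  define n where "n = (\<chi> j. det (R (axis j 1)))"
  have lin: "n \<bullet> w = det (R w)" for w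
  proof -
    have "det (R w) = det (\<chi> i. if i = k0 then (\<Sum>j\<in>UNIV. w$j *s axis j 1) else g i)"
      by (simp only: R_def basis_expansion)
    also have "\<dots> = (\<Sum>j\<in>UNIV. det (\<chi> i. if i = k0 then w$j *s axis j 1 else g i))"
      by (rule det_linear_row_sum) simp
    also have "\<dots> = (\<Sum>j\<in>UNIV. w$j * det (R (axis j 1)))"
      unfolding R_def by (subst det_row_mul) simp
    also have "\<dots> = n \<bullet> w" by (simp add: n_def inner_vec_def mult.commute)
    finally show ?thesis by simp
  qed
  have gB: "g i \<in> B" if "i \<noteq> k0" for i using g that by (auto simp: bij_betw_def)
  have "integral_vec n"
    unfolding integral_vec_def n_def
  proof
    fix j
    show "(\<chi> j. det (R (axis j 1))) $ j \<in> \<int>"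
      using gB intB by (auto intro!: det_integral simp: R_def axis_def integral_vec_def)
  qed
  moreover have "n \<bullet> b = 0" if "b \<in> B" for b
  proof -
    obtain i where i: "i \<noteq> k0" "b = g i" using g \<open>b \<in> B\<close> by (auto simp: bij_betw_def)
    have "det (R b) = 0"
      by (rule det_identical_rows[of k0 i]) (use i in \<open>auto simp: row_def R_def\<close>)
    then show ?thesis by (simp add: lin)
  qed
  moreover have "n \<noteq> 0"
  proof -
    have "span B \<noteq> UNIV"
    proof
      assume "span B = UNIV"
      then have "dim B = CARD('n)" by (metis dim_UNIV dim_span DIM_cart DIM_real nat_mult_1_right)
      moreover have "dim B = card B" using indB by (rule dim_eq_card_independent)
      moreover have "0 < CARD('n)" by (simp add: card_gt_0_iff)
      ultimately show False using cB by linarith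
    qed
    then obtain w where w: "w \<notin> span B" by auto
    have ind: "independent (insert w B)" using w indB by (rule independent_insertI)
    have wB: "w \<notin> B" using w span_base by blast
    have rows: "rows (R w) = insert w B"
    proof -
      have "rows (R w) = {if i = k0 then w else g i | i. i \<in> UNIV}"
        by (simp add: rows_def row_def R_def vec_lambda_eta)
      also have "\<dots> = insert w (g ` (UNIV - {k0}))" by auto
      also have "\<dots> = insert w B" using g by (simp add: bij_betw_def)
      finally show ?thesis .
    qed
    have "card (insert w B) = CARD('n)" using wB finB cB by simp
    moreover have "card (insert w B) \<le> dim (rows (R w))"
      using ind rows by (simp add: independent_card_le_dim)
    ultimately have "\<not> rank (R w) < CARD('n)" by (simp add: row_rank_def)
    then have "det (R w) \<noteq> 0" using det_eq_0_rank by blast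
    then show ?thesis using lin[of w] by auto
  qed
  ultimately show ?thesis by blast
qed

lemma primitive_exists:
  fixes n :: "real^'n"
  assumes "integral_vec n" "n \<noteq> 0"
  shows "\<exists>m (k::nat). primitive_vec m \<and> k \<ge> 1 \<and> n = real k *\<^sub>R m"
proof -
  obtain i where i: "n $ i \<noteq> 0" using assms(2) by (auto simp: vec_eq_iff)
  define K where "K = {k::nat. k \<ge> 1 \<and> integral_vec ((1 / real k) *\<^sub>R n)}"
  have bound: "k \<le> nat \<lceil>\<bar>n $ i\<bar>\<rceil>" if "k \<in> K" for k
  proof -
    have k1: "k \<ge> 1" using that by (simp add: K_def)
    have "integral_vec ((1 / real k) *\<^sub>R n)" using that by (simp add: K_def)
    then have iz: "(1 / real k) * n $ i \<in> \<int>" unfolding integral_vec_def by simp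
    have nz: "(1 / real k) * n $ i \<noteq> 0" using i k1 by simp
    have ge: "1 \<le> \<bar>(1 / real k) * n $ i\<bar>" by (rule Ints_nonzero_abs_ge1[OF iz nz])
    have kk: "real k * ((1 / real k) * n $ i) = n $ i" using k1 by simp
    have eq: "\<bar>n $ i\<bar> = real k * \<bar>(1 / real k) * n $ i\<bar>"
    proof -
      have "\<bar>n $ i\<bar> = \<bar>real k * ((1 / real k) * n $ i)\<bar>" by (simp only: kk)
      also have "\<dots> = real k * \<bar>(1 / real k) * n $ i\<bar>" by (simp only: abs_mult abs_of_nat)
      finally show ?thesis .
    qed
    have "real k * 1 \<le> real k * \<bar>(1 / real k) * n $ i\<bar>" using ge by (intro mult_left_mono) auto
    then have r: "real k \<le> \<bar>n $ i\<bar>" using eq by linarith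
    have "int k \<le> \<lceil>\<bar>n $ i\<bar>\<rceil>" using ceiling_mono[OF r] by (simp only: ceiling_of_nat)
    then have "nat (int k) \<le> nat \<lceil>\<bar>n $ i\<bar>\<rceil>" by (rule nat_mono)
    then show ?thesis by (simp only: nat_int)
  qed
  have "K \<subseteq> {..nat \<lceil>\<bar>n $ i\<bar>\<rceil>}" using bound by auto
  then have finK: "finite K" using finite_subset by blast
  have oneK: "1 \<in> K" using assms(1) by (simp add: K_def)
  define k where "k = Max K"
  have kK: "k \<in> K" unfolding k_def using finK oneK by (metis Max_in empty_iff)
  have kmax: "j \<le> k" if "j \<in> K" for j using finK that by (simp add: k_def)
  have k1: "k \<ge> 1" using kK by (simp add: K_def)
  define m where "m = (1 / real k) *\<^sub>R n"
  have "primitive_vec m"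
    unfolding primitive_vec_def
  proof (intro conjI allI impI)
    show "integral_vec m" using kK by (simp add: K_def m_def)
    show "m \<noteq> 0" using k1 assms(2) by (simp add: m_def)
    fix j :: nat and m'
    assume a: "integral_vec m' \<and> m = real j *\<^sub>R m'"
    then have j0: "j \<noteq> 0" using \<open>m \<noteq> 0\<close> by auto
    have "m' = (1 / real j) *\<^sub>R m" using a j0 by simp
    then have "(1 / real (k * j)) *\<^sub>R n = m'"
      using j0 k1 by (simp add: m_def mult.commute)
    then have "k * j \<in> K" using a k1 j0 by (simp add: K_def)
    then have "k * j \<le> k" by (rule kmax)
    then show "j = 1" using k1 j0 by (cases j) auto
  qed
  moreover have "n = real k *\<^sub>R m" using k1 by (simp add: m_def)
  ultimately show ?thesis using k1 by blast
qed



lemma key_facet: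
  fixes P :: "(real^'n) set"
  assumes lp: "lattice_polytope P" and int: "interior P \<noteq> {}" and pP: "p \<notin> P"
  obtains C m \<beta> where "C facet_of P" "primitive_inner_normal P C m" "\<beta> \<in> \<int>"
    "\<forall>y\<in>C. m \<bullet> y = \<beta>" "\<forall>x\<in>P. \<beta> \<le> m \<bullet> x" "m \<bullet> p < \<beta>" "m \<noteq> 0"
proof -
  obtain S where S: "finite S" "\<forall>x\<in>S. integral_vec x" "P = convex hull S"
    using lp unfolding lattice_polytope_def by blast
  have "polytope P" using S by (simp add: polytope_convex_hull)
  then have "polyhedron P" by (rule polytope_imp_polyhedron)
  then obtain F where "finite F" and seq: "P = affine hull P \<inter> \<Inter>F"
             and faces: "\<And>h. h \<in> F \<Longrightarrow> \<exists>a b. a \<noteq> 0 \<and> h = {x. a \<bullet> x \<le> b}"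
             and min: "\<And>F'. F' \<subset> F \<Longrightarrow> P \<subset> (affine hull P) \<inter> \<Inter>F'"
    by (simp add: polyhedron_Int_affine_minimal) meson
  then obtain a b where ab: "\<And>h. h \<in> F \<Longrightarrow> a h \<noteq> 0 \<and> h = {x. a h \<bullet> x \<le> b h}"
    by metis
  have aff: "affine hull P = UNIV" using int by (rule affine_hull_nonempty_interior)
  obtain h where hF: "h \<in> F" and ph: "p \<notin> h" using pP seq aff by auto
  define A where "A = a h"
  define bb where "bb = b h"
  have A0: "A \<noteq> 0" using ab hF by (simp add: A_def)
  have pgt: "bb < A \<bullet> p" using ab[OF hF] ph by (auto simp: A_def bb_def)
  have Ple: "\<forall>x\<in>P. A \<bullet> x \<le> bb"
    using seq ab hF by (auto simp: A_def bb_def)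
  define C where "C = P \<inter> {x. A \<bullet> x = bb}"
  have facet: "C facet_of P"
    unfolding C_def A_def bb_def
    using facet_of_polyhedron_explicit[OF \<open>finite F\<close> seq ab min] hF by blast
  then have "C face_of P" by (rule facet_of_imp_face_of)
  then obtain T where TS: "T \<subseteq> S" and CT: "C = convex hull T"
    using face_of_convex_hull_subset[of S C] S finite_imp_compact by metis
  have "C \<noteq> {}" using facet by (simp add: facet_of_def)
  then obtain t0 where t0: "t0 \<in> T" using CT by auto
  have "aff_dim C = aff_dim P - 1" using facet by (simp add: facet_of_def)
  also have "aff_dim P = int CARD('n)" using aff_dim_nonempty_interior[OF int] by simp
  finally have affC: "aff_dim C = int CARD('n) - 1" .
  define D where "D = (+) (- t0) ` T"
  have "aff_dim T = int (dim D)" unfolding D_def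
    by (rule aff_dim_eq_dim) (rule hull_inc[OF t0])
  then have dimD: "dim D = CARD('n) - 1"
    using affC CT aff_dim_convex_hull[of T] by simp
  obtain Bs where Bs: "Bs \<subseteq> D" "independent Bs" "D \<subseteq> span Bs" "card Bs = dim D"
    by (rule basis_exists)
  have TC: "T \<subseteq> C" unfolding CT by (rule hull_subset)
  have Dint: "\<forall>d\<in>D. integral_vec d"
    using TS S(2) t0 by (auto simp: D_def intro!: integral_vec_diff)
  have BsInt: "\<forall>b\<in>Bs. integral_vec b" using Bs(1) Dint by blast
  have cardBs: "card Bs = CARD('n) - 1" using Bs(4) dimD by simp
  obtain n0 where n0: "integral_vec n0" "n0 \<noteq> 0" "\<forall>b\<in>Bs. n0 \<bullet> b = 0"
    using integral_normal[OF Bs(2) cardBs BsInt] by blast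
  have n0orth: "x \<bullet> n0 = 0" if "x \<in> span Bs" for x
    using orthogonal_to_span[OF that, of n0] n0(3) by (simp add: orthogonal_def inner_commute)
  have Aorth0: "A \<bullet> d = 0" if "d \<in> D" for d
  proof -
    from that obtain t where t: "t \<in> T" "d = - t0 + t" unfolding D_def by blast
    have "A \<bullet> t = bb" "A \<bullet> t0 = bb" using t TC t0 by (auto simp: C_def)
    then show ?thesis using t by (simp add: inner_add_right inner_diff_right)
  qed
  have Aorth: "x \<bullet> A = 0" if "x \<in> span Bs" for x
  proof -
    have "x \<in> span D" using that Bs(1) span_mono by blast
    then show ?thesis
      using orthogonal_to_span[of x D A] Aorth0 by (simp add: orthogonal_def inner_commute)
  qed
  define W where "W = {y \<in> UNIV. \<forall>x\<in>span Bs. orthogonal x y}"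
  have "dim W + dim (span Bs) = dim (UNIV :: (real^'n) set)"
    unfolding W_def by (rule dim_subspace_orthogonal_to_vectors) auto
  moreover have "dim (span Bs) = CARD('n) - 1"
    using Bs(2,4) dimD by (simp add: dim_eq_card_independent)
  moreover have "dim (UNIV :: (real^'n) set) = CARD('n)" by simp
  moreover have "0 < CARD('n)" by (simp add: card_gt_0_iff)
  ultimately have dimW: "dim W = 1" by linarith
  define c where "c = (n0 \<bullet> A) / (A \<bullet> A)"
  define v where "v = n0 - c *\<^sub>R A"
  have AA: "A \<bullet> A \<noteq> 0" using A0 by simp
  have vA: "A \<bullet> v = 0" using AA by (simp add: v_def c_def inner_diff_right inner_commute)
  have "v = 0"
  proof (rule ccontr)
    assume v0: "v \<noteq> 0"
    have AW: "A \<in> W" using Aorth by (simp add: W_def orthogonal_def)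
    have vW: "v \<in> W" using Aorth n0orth
      by (simp add: W_def orthogonal_def v_def inner_diff_right)
    have Av: "A \<noteq> v" using vA AA by auto
    have "pairwise orthogonal {A, v}"
      using vA by (auto simp: pairwise_def orthogonal_def inner_commute)
    then have "independent {A, v}" using A0 v0
      by (intro pairwise_orthogonal_independent) auto
    then have "card {A, v} \<le> dim W" using AW vW by (intro independent_card_le_dim) auto
    then show False using Av dimW by simp
  qed
  then have n0c: "n0 = c *\<^sub>R A" by (simp add: v_def)
  then have c0: "c \<noteq> 0" using n0(2) by auto
  define \<mu> where "\<mu> = - \<bar>c\<bar>"
  define n1 where "n1 = (if c > 0 then - n0 else n0)"
  have n1\<mu>: "n1 = \<mu> *\<^sub>R A" using n0c c0 by (auto simp: n1_def \<mu>_def)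
  have "integral_vec n1" using n0(1) by (simp add: n1_def integral_vec_neg)
  moreover have "n1 \<noteq> 0" using n0(2) by (simp add: n1_def)
  ultimately obtain m k where mk: "primitive_vec m" "(k::nat) \<ge> 1" "n1 = real k *\<^sub>R m"
    using primitive_exists by blast
  define lam where "lam = \<mu> / real k"
  have lneg: "lam < 0" using c0 mk(2) by (simp add: lam_def \<mu>_def divide_neg_pos)
  have mA: "m = lam *\<^sub>R A"
  proof -
    have "real k *\<^sub>R m = \<mu> *\<^sub>R A" using mk(3) n1\<mu> by simp
    then have "(1 / real k) *\<^sub>R (real k *\<^sub>R m) = (1 / real k) *\<^sub>R (\<mu> *\<^sub>R A)" by simp
    then show ?thesis using mk(2) by (simp add: lam_def)
  qed
  define \<beta> where "\<beta> = m \<bullet> t0"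
  have Cval: "\<forall>y\<in>C. m \<bullet> y = \<beta>"
    using TC t0 by (auto simp: \<beta>_def mA C_def)
  have Pval: "\<forall>x\<in>P. \<beta> \<le> m \<bullet> x"
  proof
    fix x assume "x \<in> P"
    then have "A \<bullet> x \<le> bb" using Ple by blast
    then have "lam * bb \<le> lam * (A \<bullet> x)" using lneg by (simp add: mult_left_mono_neg)
    moreover have "\<beta> = lam * bb" using TC t0 by (auto simp: \<beta>_def mA C_def)
    ultimately show "\<beta> \<le> m \<bullet> x" by (simp add: mA)
  qed
  have "lam * (A \<bullet> p) < lam * bb" using lneg pgt by (simp add: mult_strict_left_mono_neg)
  moreover have "\<beta> = lam * bb" using TC t0 by (auto simp: \<beta>_def mA C_def)
  ultimately have plt: "m \<bullet> p < \<beta>" by (simp add: mA)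
  have bint: "\<beta> \<in> \<int>" unfolding \<beta>_def
    using mk(1) TS t0 S(2) by (intro integral_inner) (auto simp: primitive_vec_def)
  have pin: "primitive_inner_normal P C m"
    unfolding primitive_inner_normal_def using mk(1) Cval Pval by auto
  have m0: "m \<noteq> 0" using mk(1) by (simp add: primitive_vec_def)
  show ?thesis by (rule that[OF facet pin bint Cval Pval plt m0])
qed



lemma floor_plus_dilate:
  fixes P :: "(real^'n) set"
  assumes lp: "lattice_polytope P" and c: "c > 0"
  shows "floor_polytope (dilate c P) + dilate (real m) P \<subseteq> floor_polytope (dilate (c + real m) P)"
proof -
  obtain S where S: "finite S" "\<forall>x\<in>S. integral_vec x" "P = convex hull S"
    using lp unfolding lattice_polytope_def by blast
  have cvx: "convex P" using S by simp
  define X where "X = {x. integral_vec x \<and> x \<in> interior (dilate c P)}"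
  define Y where "Y = {x. integral_vec x \<and> x \<in> interior (dilate (c + real m) P)}"
  have dm: "dilate (real m) P = convex hull (dilate (real m) S)"
    unfolding dilate_def S(3) by (rule convex_hull_scaling[symmetric])
  have "floor_polytope (dilate c P) + dilate (real m) P = convex hull X + convex hull (dilate (real m) S)"
    by (simp add: floor_polytope_def X_def dm)
  also have "\<dots> = convex hull (X + dilate (real m) S)" by (rule convex_hull_set_plus[symmetric])
  also have "\<dots> \<subseteq> convex hull Y"
  proof (rule hull_mono, rule subsetI)
    fix z assume "z \<in> X + dilate (real m) S"
    then obtain w s where ws: "w \<in> X" "s \<in> S" "z = w + real m *\<^sub>R s"
      by (auto simp: set_plus_def dilate_def)
    have "integral_vec z" using ws S(2) X_def by (auto intro!: integral_vec_add integral_vec_nat_scale)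
    moreover have "z \<in> interior (dilate (c + real m) P)"
    proof -
      let ?T = "(\<lambda>x. real m *\<^sub>R s + x) ` interior (dilate c P)"
      have "open ?T" by (rule open_translation) simp
      moreover have "?T \<subseteq> dilate (c + real m) P"
      proof
        fix y assume "y \<in> ?T"
        then obtain u where u: "u \<in> interior (dilate c P)" "y = real m *\<^sub>R s + u" by auto
        then have "u \<in> dilate c P" using interior_subset by blast
        moreover have "real m *\<^sub>R s \<in> dilate (real m) P"
        proof -
          have "s \<in> P" unfolding S(3) by (rule hull_inc[OF ws(2)])
          then show ?thesis unfolding dilate_def by (rule imageI)
        qed
        ultimately have "y \<in> dilate (real m) P + dilate c P" using u(2) by (auto simp: set_plus_def)
        also have "\<dots> = dilate (real m + c) P" using cvx c by (intro dilate_add[symmetric]) auto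
        finally show "y \<in> dilate (c + real m) P" by (simp add: add.commute)
      qed
      ultimately have "?T \<subseteq> interior (dilate (c + real m) P)" by (rule interior_maximal[rotated])
      moreover have "z \<in> ?T" using ws X_def by (auto simp: add.commute)
      ultimately show ?thesis by blast
    qed
    ultimately show "z \<in> Y" by (simp add: Y_def)
  qed
  also have "\<dots> = floor_polytope (dilate (c + real m) P)" by (simp add: floor_polytope_def Y_def)
  finally show ?thesis .
qed

theorem lemma3p9:
  fixes P :: "(real^'n) set" and a :: nat
  assumes "lattice_polytope P"
    and "interior P \<noteq> {}"
    and "a = codegree P"
    and "P = msum (floor_polytope (dilate (real a) P)) (remainder_polytope P)"
  shows "(\<forall>k::nat. k \<ge> 1 \<longrightarrow>
            dilate (real k) P = msum (floor_polytope (dilate (real (k + a - 1)) P)) (remainder_polytope P))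
       \<and> (\<forall>k'::nat. k' \<ge> a \<longrightarrow>
            floor_polytope (dilate (real k') P) = msum (floor_polytope (dilate (real a) P)) (dilate (real (k' - a)) P))"
proof -
  note lp = assms(1)
  obtain S where S: "finite S" "\<forall>x\<in>S. integral_vec x" "P = convex hull S"
    using lp unfolding lattice_polytope_def by blast
  have cvx: "convex P" using S by simp
  have cptP: "compact P" using S by (simp add: finite_imp_compact_convex_hull)
  have Pne: "P \<noteq> {}" using assms(2) interior_subset by blast
  define Fl where "Fl c = floor_polytope (dilate c P)" for c
  define R where "R = remainder_polytope P"
  have hyp: "P = Fl (real a) + R" using assms(4) by (simp add: Fl_def R_def msum_eq)
  have a1: "a \<ge> 1"
  proof (rule ccontr)
    assume "\<not> a \<ge> 1"
    then have a0: "a = 0" by simp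
    have "dilate 0 P = {0}" using Pne by (auto simp: dilate_def)
    then have "Fl 0 = {}" by (simp add: Fl_def floor_polytope_def)
    then show False using hyp a0 Pne by simp
  qed
  have Rne: "R \<noteq> {}" using hyp Pne by auto
  have Fane: "Fl (real a) \<noteq> {}" using hyp Pne by auto
  then obtain x0 where x0: "x0 \<in> Fl (real a)" by blast
  have bR: "bounded R"
  proof -
    have "R \<subseteq> (\<lambda>x. - x0 + x) ` P"
    proof
      fix r assume "r \<in> R"
      then have "x0 + r \<in> P" using x0 hyp by (auto simp: set_plus_def)
      then show "r \<in> (\<lambda>x. - x0 + x) ` P" by (rule rev_image_eqI) simp
    qed
    moreover have "bounded ((\<lambda>x. - x0 + x) ` P)"
      using cptP compact_imp_bounded bounded_translation by blast
    ultimately show ?thesis using bounded_subset by blast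
  qed
  have part1: "dilate (real k) P = Fl (real (k + a - 1)) + R" if k1: "k \<ge> 1" for k
  proof
    have "dilate (real k) P = dilate (real (k - 1)) P + dilate 1 P"
      using cvx k1 by (subst dilate_add[symmetric]) auto
    also have "\<dots> = dilate (real (k - 1)) P + (Fl (real a) + R)"
      using hyp by (simp add: dilate_1)
    also have "\<dots> = (Fl (real a) + dilate (real (k - 1)) P) + R"
      by (simp add: algebra_simps)
    also have "\<dots> \<subseteq> Fl (real a + real (k - 1)) + R"
      using floor_plus_dilate[OF lp, of "real a" "k - 1"] a1 by (intro set_plus_mono2) (auto simp: Fl_def)
    also have "real a + real (k - 1) = real (k + a - 1)" using k1 a1 by simp
    finally show "dilate (real k) P \<subseteq> Fl (real (k + a - 1)) + R" .
  next
    show "Fl (real (k + a - 1)) + R \<subseteq> dilate (real k) P"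
    proof
      fix z assume "z \<in> Fl (real (k + a - 1)) + R"
      then obtain x r where xr: "x \<in> Fl (real (k + a - 1))" "r \<in> R" "z = x + r"
        by (auto elim!: set_plus_elim)
      show "z \<in> dilate (real k) P"
      proof (rule ccontr)
        assume zn: "z \<notin> dilate (real k) P"
        have "(1 / real k) *\<^sub>R z \<notin> P"
        proof
          assume "(1 / real k) *\<^sub>R z \<in> P"
          then have "real k *\<^sub>R ((1 / real k) *\<^sub>R z) \<in> dilate (real k) P"
            unfolding dilate_def by (rule imageI)
          then show False using zn k1 by simp
        qed
        then obtain C m \<beta> where Cm: "C facet_of P" "primitive_inner_normal P C m" "\<beta> \<in> \<int>"
          "\<forall>y\<in>C. m \<bullet> y = \<beta>" "\<forall>x\<in>P. \<beta> \<le> m \<bullet> x" "m \<bullet> ((1 / real k) *\<^sub>R z) < \<beta>" "m \<noteq> 0"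
          using key_facet[OF lp assms(2)] by metis
        have mz: "m \<bullet> z < real k * \<beta>"
          using Cm(6) k1 by (simp add: inner_scaleR_right field_simps)
        define c where "c = real (k + a - 1)"
        have c0: "c \<ge> 0" by (simp add: c_def)
        have cint: "c * \<beta> \<in> \<int>" using Cm(3) by (simp add: c_def)
        have lat: "c * \<beta> + 1 \<le> m \<bullet> w"
          if w: "integral_vec w" "w \<in> interior (dilate c P)" for w
        proof -
          have "dilate c P \<subseteq> {y. c * \<beta> \<le> m \<bullet> y}"
            using Cm(5) c0 by (auto simp: dilate_def intro!: mult_left_mono)
          then have lt: "c * \<beta> < m \<bullet> w" using interior_strict[OF w(2) _ Cm(7)] by blast
          have "m \<bullet> w \<in> \<int>"
            using w(1) Cm(2) by (intro integral_inner) (auto simp: primitive_inner_normal_def primitive_vec_def)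
          then obtain i where i: "m \<bullet> w = of_int i" by (auto elim: Ints_cases)
          from cint obtain j where j: "c * \<beta> = of_int j" by (auto elim: Ints_cases)
          have "j < i" using lt i j by simp
          then have "j + 1 \<le> i" by simp
          then have "real_of_int (j + 1) \<le> of_int i" by (simp only: of_int_le_iff)
          then show ?thesis using i j by simp
        qed
        have "x \<in> convex hull {w. integral_vec w \<and> w \<in> interior (dilate c P)}"
          using xr(1) by (simp add: Fl_def floor_polytope_def c_def)
        moreover have "convex hull {w. integral_vec w \<and> w \<in> interior (dilate c P)} \<subseteq> {y. c * \<beta> + 1 \<le> m \<bullet> y}"
        proof (rule hull_minimal)
          show "{w. integral_vec w \<and> w \<in> interior (dilate c P)} \<subseteq> {y. c * \<beta> + 1 \<le> m \<bullet> y}"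
            using lat by blast
          show "convex {y. c * \<beta> + 1 \<le> m \<bullet> y}" by (rule convex_halfspace_ge)
        qed
        ultimately have mx: "c * \<beta> + 1 \<le> m \<bullet> x" by blast
        obtain t where t: "t \<in> C" using Cm(1) by (auto simp: facet_of_def)
        define Q where "Q = {x. integral_vec x \<and>
           (\<forall>F n. F facet_of P \<and> primitive_inner_normal P F n \<longrightarrow>
              (\<forall>y\<in>F. n \<bullet> x \<ge> (real (codegree P) - 1) * (- (n \<bullet> y)) - 1))}"
        have rQ: "r \<in> convex hull Q"
          using xr(2) by (simp add: R_def remainder_polytope_def Q_def)
        have Qsub: "Q \<subseteq> {y. (real a - 1) * (- \<beta>) - 1 \<le> m \<bullet> y}"
        proof
          fix q assume "q \<in> Q"
          then have "\<forall>y\<in>C. m \<bullet> q \<ge> (real (codegree P) - 1) * (- (m \<bullet> y)) - 1"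
            using Cm(1,2) unfolding Q_def by blast
          then have "m \<bullet> q \<ge> (real (codegree P) - 1) * (- (m \<bullet> t)) - 1" using t by blast
          then show "q \<in> {y. (real a - 1) * (- \<beta>) - 1 \<le> m \<bullet> y}"
            using Cm(4) t assms(3) by simp
        qed
        have "convex hull Q \<subseteq> {y. (real a - 1) * (- \<beta>) - 1 \<le> m \<bullet> y}"
        proof (rule hull_minimal)
          show "Q \<subseteq> {y. (real a - 1) * (- \<beta>) - 1 \<le> m \<bullet> y}" by (rule Qsub)
          show "convex {y. (real a - 1) * (- \<beta>) - 1 \<le> m \<bullet> y}" by (rule convex_halfspace_ge)
        qed
        then have mr: "(real a - 1) * (- \<beta>) - 1 \<le> m \<bullet> r" using rQ by blast
        have mzs: "m \<bullet> z = m \<bullet> x + m \<bullet> r" using xr(3) by (simp add: inner_add_right)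
        have ceq: "c = real k + real a - 1" using k1 a1 by (simp add: c_def)
        have cb: "c * \<beta> = real k * \<beta> + real a * \<beta> - \<beta>" unfolding ceq by (simp add: algebra_simps)
        have "(real a - 1) * (- \<beta>) = \<beta> - real a * \<beta>" by (simp add: algebra_simps)
        then have "real k * \<beta> \<le> m \<bullet> z" using mx mr mzs cb by linarith
        then show False using mz by simp
      qed
    qed
  qed
  have part2: "Fl (real k') = Fl (real a) + dilate (real (k' - a)) P" if k': "k' \<ge> a" for k'
  proof
    define m where "m = k' - a"
    have e1: "dilate (real (m + 1)) P = Fl (real k') + R"
      using part1[of "m + 1"] k' a1 by (simp add: m_def)
    have "dilate (real (m + 1)) P = dilate (real m + 1) P" by (simp add: add.commute)
    also have "\<dots> = dilate (real m) P + dilate 1 P" by (rule dilate_add[OF cvx]) auto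
    also have "\<dots> = (Fl (real a) + dilate (real m) P) + R"
      using hyp by (simp add: dilate_1 algebra_simps)
    finally have e2: "Fl (real k') + R = (Fl (real a) + dilate (real m) P) + R" using e1 by simp
    have finX: "finite {x. integral_vec x \<and> x \<in> interior (dilate (real a) P)}"
    proof -
      have "bounded (interior (dilate (real a) P))"
        using cptP compact_imp_bounded bounded_scaling bounded_interior unfolding dilate_def by blast
      then show ?thesis using finite_integral_bounded by blast
    qed
    have cF: "compact (Fl (real a))"
      using finX by (simp add: Fl_def floor_polytope_def finite_imp_compact_convex_hull)
    have cD: "compact (dilate (real m) P)" unfolding dilate_def using cptP by (rule compact_scaling)
    have "compact (Fl (real a) + dilate (real m) P)"
      using compact_sums[OF cF cD] by (simp add: msum_def[symmetric] msum_eq)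
    moreover have "convex (Fl (real a) + dilate (real m) P)"
      using cvx by (intro convex_set_plus) (auto simp: Fl_def floor_polytope_def dilate_def intro: convex_scaling)
    ultimately show "Fl (real k') \<subseteq> Fl (real a) + dilate (real (k' - a)) P"
      using cancel_sum[of "Fl (real k')" R "Fl (real a) + dilate (real m) P"] e2 bR Rne
      by (simp add: compact_imp_closed m_def)
    show "Fl (real a) + dilate (real (k' - a)) P \<subseteq> Fl (real k')"
      using floor_plus_dilate[OF lp, of "real a" "k' - a"] a1 k' by (simp add: Fl_def)
  qed
  show ?thesis
  proof (intro conjI allI impI)
    fix k :: nat assume "k \<ge> 1"
    show "dilate (real k) P = msum (floor_polytope (dilate (real (k + a - 1)) P)) (remainder_polytope P)"
      using part1[OF \<open>k \<ge> 1\<close>] unfolding msum_eq Fl_def R_def .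
  next
    fix k' :: nat assume "k' \<ge> a"
    show "floor_polytope (dilate (real k') P) = msum (floor_polytope (dilate (real a) P)) (dilate (real (k' - a)) P)"
      using part2[OF \<open>k' \<ge> a\<close>] unfolding msum_eq Fl_def .
  qed
qed

end
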